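(* Let $G$ be a finite group. The following statements are equivalent: (a) $G$ is abelian; (b) $\mathcal B(G)$ is a Krull monoid; (c) $\mathcal B(G)$ is a transfer Krull monoid.
   Context: Let $G$ be a finite group written multiplicatively with identity $1_G$. $\mathcal F(G)$ denotes the free abelian monoid with basis $G$; its elements are sequences $S=g_1\boldsymbol{\cdot}\ldots\boldsymbol{\cdot}g_\ell$ (unordered, repetitions allowed, operation $\boldsymbol{\cdot}$ = concatenation). $\pi(S)=\{g_{\tau(1)}\cdots g_{\tau(\ell)}:\tau\text{ a permutation of }[1,\ell]\}$, $\pi(\text{empty sequence})=\{1_G\}$, and $\mathcal B(G)=\{S\in\mathcal F(G):1_G\in\pi(S)\}$. All monoids are commutative and cancellative. A monoid homomorphism $\varphi:H\to D$ is a divisor homomorphism if $\varphi(a)\mid\varphi(b)$ implies $a\mid b$. A monoid $H$ is a Krull monoid if there is a divisor homomorphism from $H$ into a free abelian monoid. A monoid homomorphism $\theta:H\to B$ is a transfer homomorphism if (T1) $B=\theta(H)B^\times$ and $\theta^{-1}(B^\times)=H^\times$, and (T2) whenever $u\in H$, $b,c\in B$ and $\theta(u)=bc$, there exist $v,w\in H$ with $u=vw$, $\theta(v)B^\times=bB^\times$ and $\theta(w)B^\times=cB^\times$. A monoid $H$ is a transfer Krull monoid if there exists a transfer homomorphism from $H$ to a Krull monoid. *)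

theory Defs
  imports "HOL-Algebra.Group" "HOL-Algebra.Divisibility" "HOL-Library.Multiset"
begin

definition seq_prods :: "('a, 'b) monoid_scheme \<Rightarrow> 'a multiset \<Rightarrow> 'a set" where
  "seq_prods G S = {foldr (\<lambda>x y. x \<otimes>\<^bsub>G\<^esub> y) xs \<one>\<^bsub>G\<^esub> | xs. mset xs = S}"

definition free_ab_monoid :: "'p set \<Rightarrow> 'p multiset monoid" where
  "free_ab_monoid P = \<lparr>carrier = {S. set_mset S \<subseteq> P}, mult = (+), one = {#}\<rparr>"

definition BG :: "('a, 'b) monoid_scheme \<Rightarrow> 'a multiset monoid" where
  "BG G = \<lparr>carrier = {S. set_mset S \<subseteq> carrier G \<and> \<one>\<^bsub>G\<^esub> \<in> seq_prods G S},
           mult = (+), one = {#}\<rparr>"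

definition mon_hom :: "('a, 'm) monoid_scheme \<Rightarrow> ('b, 'n) monoid_scheme \<Rightarrow> ('a \<Rightarrow> 'b) set" where
  "mon_hom H D = {\<phi>. \<phi> \<in> carrier H \<rightarrow> carrier D
     \<and> (\<forall>x\<in>carrier H. \<forall>y\<in>carrier H. \<phi> (x \<otimes>\<^bsub>H\<^esub> y) = \<phi> x \<otimes>\<^bsub>D\<^esub> \<phi> y)
     \<and> \<phi> \<one>\<^bsub>H\<^esub> = \<one>\<^bsub>D\<^esub>}"

definition divisor_hom :: "('a, 'm) monoid_scheme \<Rightarrow> ('b, 'n) monoid_scheme \<Rightarrow> ('a \<Rightarrow> 'b) \<Rightarrow> bool" where
  "divisor_hom H D \<phi> \<longleftrightarrow> \<phi> \<in> mon_hom H D \<and>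
     (\<forall>a\<in>carrier H. \<forall>b\<in>carrier H. \<phi> a divides\<^bsub>D\<^esub> \<phi> b \<longrightarrow> a divides\<^bsub>H\<^esub> b)"

(* H is a Krull monoid: a (commutative cancellative) monoid admitting a divisor homomorphism
   into a free abelian monoid F(P); the basis P is taken inside the type 'p *)
definition Krull_monoid :: "('a, 'm) monoid_scheme \<Rightarrow> 'p itself \<Rightarrow> bool" where
  "Krull_monoid H (_ :: 'p itself) \<longleftrightarrow> comm_monoid_cancel H \<and>
     (\<exists>(P :: 'p set) \<phi>. divisor_hom H (free_ab_monoid P) \<phi>)"

definition unit_coset :: "('b, 'n) monoid_scheme \<Rightarrow> 'b \<Rightarrow> 'b set" where
  "unit_coset B x = (\<lambda>e. x \<otimes>\<^bsub>B\<^esub> e) ` Units B"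

definition transfer_hom :: "('a, 'm) monoid_scheme \<Rightarrow> ('b, 'n) monoid_scheme \<Rightarrow> ('a \<Rightarrow> 'b) \<Rightarrow> bool" where
  "transfer_hom H B \<theta> \<longleftrightarrow> \<theta> \<in> mon_hom H B
     \<and> carrier B = {\<theta> u \<otimes>\<^bsub>B\<^esub> e | u e. u \<in> carrier H \<and> e \<in> Units B}
     \<and> {u \<in> carrier H. \<theta> u \<in> Units B} = Units H
     \<and> (\<forall>u\<in>carrier H. \<forall>b\<in>carrier B. \<forall>c\<in>carrier B. \<theta> u = b \<otimes>\<^bsub>B\<^esub> c \<longrightarrow>
          (\<exists>v\<in>carrier H. \<exists>w\<in>carrier H. u = v \<otimes>\<^bsub>H\<^esub> w
             \<and> unit_coset B (\<theta> v) = unit_coset B b \<and> unit_coset B (\<theta> w) = unit_coset B c))"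

(* H is transfer Krull: there is a transfer homomorphism from H to a Krull monoid;
   the target monoid has elements in type 'b, its Krull basis lives in type 'p *)
definition transfer_Krull :: "('a, 'm) monoid_scheme \<Rightarrow> 'b itself \<Rightarrow> 'p itself \<Rightarrow> bool" where
  "transfer_Krull H (_ :: 'b itself) (_ :: 'p itself) \<longleftrightarrow>
     (\<exists>(B :: 'b monoid) \<theta>. Krull_monoid B TYPE('p) \<and> transfer_hom H B \<theta>)"

end

theory Submission imports Defs "HOL-Algebra.Multiplicative_Group" begin

definition lprod :: "('a, 'b) monoid_scheme \<Rightarrow> 'a list \<Rightarrow> 'a" where
  "lprod G xs = foldr (\<lambda>x y. x \<otimes>\<^bsub>G\<^esub> y) xs \<one>\<^bsub>G\<^esub>"

lemma lprod_simps[simp]: "lprod G [] = \<one>\<^bsub>G\<^esub>" "lprod G (x#xs) = x \<otimes>\<^bsub>G\<^esub> lprod G xs"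
  by (simp_all add: lprod_def)

lemma seq_prods_lprod: "seq_prods G S = lprod G ` {xs. mset xs = S}"
  by (auto simp: seq_prods_def lprod_def)

lemma (in monoid) lprod_closed: "set xs \<subseteq> carrier G \<Longrightarrow> lprod G xs \<in> carrier G"
  by (induction xs) auto

lemma (in monoid) lprod_append:
  "set xs \<subseteq> carrier G \<Longrightarrow> set ys \<subseteq> carrier G \<Longrightarrow> lprod G (xs @ ys) = lprod G xs \<otimes> lprod G ys"
  by (induction xs) (auto simp: lprod_closed m_assoc)

lemma (in monoid) lprod_replicate: "x \<in> carrier G \<Longrightarrow> lprod G (replicate n x) = x [^] n"
  by (induction n) (simp, metis lprod_simps(2) replicate_Suc nat_pow_Suc nat_pow_Suc2 nat_pow_closed)

lemma BG_carrier: "S \<in> carrier (BG G) \<longleftrightarrow> set_mset S \<subseteq> carrier G \<and> (\<exists>xs. mset xs = S \<and> lprod G xs = \<one>\<^bsub>G\<^esub>)"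
  by (auto simp: BG_def seq_prods_lprod) (metis (mono_tags, lifting) image_eqI mem_Collect_eq)

lemma BG_simps[simp]: "mult (BG G) = (+)" "one (BG G) = {#}"
  by (simp_all add: BG_def)

lemma (in group) BG_add: "S \<in> carrier (BG G) \<Longrightarrow> T \<in> carrier (BG G) \<Longrightarrow> S + T \<in> carrier (BG G)"
  unfolding BG_carrier
proof (elim conjE exE, intro conjI)
  fix xs ys assume "set_mset S \<subseteq> carrier G" "set_mset T \<subseteq> carrier G" "mset xs = S" "lprod G xs = \<one>"
     "mset ys = T" "lprod G ys = \<one>"
  then show "\<exists>zs. mset zs = S + T \<and> lprod G zs = \<one>"
    by (intro exI[of _ "xs @ ys"]) (auto simp: lprod_append)
qed (auto)

lemma (in group) BG_one: "{#} \<in> carrier (BG G)"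
  by (auto simp: BG_carrier intro: exI[of _ "[]"])

lemma (in group) BG_cmc: "comm_monoid_cancel (BG G)"
  by (rule comm_monoid_cancelI, rule comm_monoidI) (auto simp: BG_add BG_one)

lemma (in group) BG_Units: "Units (BG G) = {{#}}"
  by (auto simp: Units_def BG_one)

lemma (in comm_group) lprod_perm:
  "mset xs = mset ys \<Longrightarrow> set xs \<subseteq> carrier G \<Longrightarrow> lprod G xs = lprod G ys"
proof (induction xs arbitrary: ys)
  case Nil then show ?case by simp
next
  case (Cons x xs)
  then have "x \<in> set ys" by (metis list.set_intros(1) set_mset_mset)
  then obtain ys1 ys2 where ys: "ys = ys1 @ x # ys2" by (meson split_list)
  have "mset xs = mset (ys1 @ ys2)" using Cons.prems ys by simp
  then have e: "lprod G xs = lprod G (ys1 @ ys2)" using Cons by auto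
  have s: "set ys \<subseteq> carrier G" using Cons.prems by (metis set_mset_mset)
  then have "lprod G ys = lprod G ys1 \<otimes> (x \<otimes> lprod G ys2)" using ys by (simp add: lprod_append)
  also have "\<dots> = x \<otimes> (lprod G ys1 \<otimes> lprod G ys2)" using s ys
    by (simp add: lprod_closed m_lcomm)
  also have "\<dots> = x \<otimes> lprod G (ys1 @ ys2)" using s ys by (simp add: lprod_append)
  finally show ?case using e by simp
qed

lemma size1_mset: "size M = Suc 0 \<Longrightarrow> \<exists>y. M = {#y#}"
  using size_1_singleton_mset[of M] by simp

lemma (in group) BG_single: "{#y#} \<in> carrier (BG G) \<Longrightarrow> y = \<one>"
  unfolding BG_carrier by (elim conjE exE) simp

lemma mset_pair: "mset xs = {#y, z#} \<Longrightarrow> xs = [y, z] \<or> xs = [z, y]"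
proof -
  assume m: "mset xs = {#y, z#}"
  have "length xs = size (mset xs)" by simp
  then have "length xs = 2" unfolding m by simp
  then obtain p q where xs: "xs = [p, q]"
    by (cases xs; cases "tl xs"; auto)
  with m have "{#p, q#} = {#y, z#}" by simp
  then have "(p = y \<and> q = z) \<or> (p = z \<and> q = y)" by (metis add_eq_conv_ex add_mset_eq_single)
  then show ?thesis unfolding xs by auto
qed

lemma (in group) BG_pair: "{#y, z#} \<in> carrier (BG G) \<Longrightarrow> y \<otimes> z = \<one>"
proof -
  assume a: "{#y, z#} \<in> carrier (BG G)"
  then have a2: "set_mset {#y, z#} \<subseteq> carrier G \<and> (\<exists>xs. mset xs = {#y, z#} \<and> lprod G xs = \<one>)"
    unfolding BG_carrier .
  then obtain xs where xs: "mset xs = {#y, z#}" "lprod G xs = \<one>" by blast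
  have c: "y \<in> carrier G" "z \<in> carrier G" using a2 by auto
  from mset_pair[OF xs(1)] show ?thesis
  proof
    assume "xs = [z, y]"
    then have "z \<otimes> y = \<one>" using xs c by simp
    then show ?thesis using c inv_comm by blast
  qed (use xs c in simp)
qed

lemma (in group) inv_cancel_l2: "x \<in> carrier G \<Longrightarrow> y \<in> carrier G \<Longrightarrow> inv x \<otimes> (x \<otimes> y) = y"
  by (simp add: m_assoc[symmetric])

lemma (in group) inv_cancel_r2: "x \<in> carrier G \<Longrightarrow> y \<in> carrier G \<Longrightarrow> x \<otimes> (inv x \<otimes> y) = y"
  by (simp add: m_assoc[symmetric])

lemma (in group) atom_half:
  assumes g: "g \<in> carrier G" and h: "h \<in> carrier G" and nc: "g \<otimes> h \<noteq> h \<otimes> g"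
    and b: "v + w = {#g, inv g#} + {#h, g \<otimes> inv h \<otimes> inv g#}"
    and v: "v \<in> carrier (BG G)" and w: "w \<in> carrier (BG G)" and gv: "g \<in># v" and sv: "size v = 2"
  shows False
proof -
  obtain v' where v': "v = add_mset g v'" using gv by (metis multi_member_split)
  then have "size v' = Suc 0" using sv by simp
  then obtain z where "v' = {#z#}" using size1_mset by blast
  then have vz: "v = {#g, z#}" using v' by simp
  have zc: "z \<in> carrier G" using v vz by (auto simp: BG_carrier)
  have "g \<otimes> z = \<one>" using BG_pair v vz by blast
  then have zi: "z = inv g" using inv_equality[OF inv_comm[OF _ g zc] g zc] by simp
  then have "w = {#h, g \<otimes> inv h \<otimes> inv g#}" using b unfolding vz by simp
  then have "h \<otimes> (g \<otimes> inv h \<otimes> inv g) = \<one>" using BG_pair w by blast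
  then have "h \<otimes> g \<otimes> inv h \<otimes> inv g \<otimes> (g \<otimes> h) = g \<otimes> h" using g h by (simp add: m_assoc)
  then have "h \<otimes> g = g \<otimes> h" using g h by (simp add: m_assoc inv_cancel_l2 inv_cancel_r2)
  then show False using nc by simp
qed

lemma (in group) atom:
  assumes g: "g \<in> carrier G" and h: "h \<in> carrier G" and nc: "g \<otimes> h \<noteq> h \<otimes> g"
    and b: "v + w = {#g, inv g#} + {#h, g \<otimes> inv h \<otimes> inv g#}"
    and v: "v \<in> carrier (BG G)" and w: "w \<in> carrier (BG G)"
  shows "v = {#} \<or> w = {#}"
proof (rule ccontr)
  assume ne: "\<not> (v = {#} \<or> w = {#})"
  have n1: "\<one> \<notin># v + w"
  proof
    assume "\<one> \<in># v + w"
    then have "\<one> = g \<or> \<one> = inv g \<or> \<one> = h \<or> \<one> = g \<otimes> inv h \<otimes> inv g" using b by auto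
    moreover have "g \<noteq> \<one>" using nc g h by auto
    moreover have "h \<noteq> \<one>" using nc g h by auto
    moreover have "inv g \<noteq> \<one>" using \<open>g \<noteq> \<one>\<close> g by (metis inv_inv inv_one)
    moreover have "g \<otimes> inv h \<otimes> inv g \<noteq> \<one>"
    proof
      assume "g \<otimes> inv h \<otimes> inv g = \<one>"
      then have "inv g \<otimes> (g \<otimes> inv h \<otimes> inv g) \<otimes> g = inv g \<otimes> g" using g by simp
      then have "inv h = \<one>" using g h by (simp add: m_assoc inv_cancel_l2)
      then show False using \<open>h \<noteq> \<one>\<close> h by (metis inv_inv inv_one)
    qed
    ultimately show False by fastforce
  qed
  have s4: "size v + size w = 4" using arg_cong[OF b, of size] by simp
  have "size v \<noteq> 1"
  proof
    assume "size v = 1" then obtain y where "v = {#y#}" using size1_mset by auto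
    then show False using BG_single v n1 by auto
  qed
  moreover have "size w \<noteq> 1"
  proof
    assume "size w = 1" then obtain y where "w = {#y#}" using size1_mset by auto
    then show False using BG_single w n1 by auto
  qed
  moreover have "size v \<noteq> 0" "size w \<noteq> 0" using ne by auto
  ultimately have sv: "size v = 2" "size w = 2" using s4 by linarith+
  have "g \<in># v + w" using b by simp
  then show False
  proof (cases "g \<in># v")
    case True then show False using atom_half[OF g h nc b v w True sv(1)] by blast
  next
    case False then have "g \<in># w" using \<open>g \<in># v + w\<close> by simp
    have b': "w + v = {#g, inv g#} + {#h, g \<otimes> inv h \<otimes> inv g#}"
      unfolding add.commute[of w v] by (rule b)
    show False using atom_half[OF g h nc b' w v \<open>g \<in># w\<close> sv(2)] .
  qed
qed


lemma free_simps[simp]: "mult (free_ab_monoid P) = (+)" "one (free_ab_monoid P) = {#}"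
  "carrier (free_ab_monoid P) = {S. set_mset S \<subseteq> P}"
  by (simp_all add: free_ab_monoid_def)

lemma (in group) main:
  assumes fin: "finite (carrier G)"
    and hom: "\<Phi> \<in> mon_hom (BG G) (free_ab_monoid P)"
    and i: "\<And>u. u \<in> carrier (BG G) \<Longrightarrow> \<Phi> u = {#} \<Longrightarrow> u = {#}"
    and ii: "\<And>a b. a \<in> carrier (BG G) \<Longrightarrow> b \<in> carrier (BG G) \<Longrightarrow> \<Phi> a \<subseteq># \<Phi> b \<Longrightarrow>
          \<exists>v\<in>carrier (BG G). \<exists>w\<in>carrier (BG G). b = v + w \<and> \<Phi> v = \<Phi> a"
  shows "comm_group G"
proof (rule group_comm_groupI)
  have hadd: "\<And>x y. x \<in> carrier (BG G) \<Longrightarrow> y \<in> carrier (BG G) \<Longrightarrow> \<Phi> (x + y) = \<Phi> x + \<Phi> y"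
    and hone: "\<Phi> {#} = {#}" using hom by (auto simp: mon_hom_def)
  have rep: "repeat_mset m S \<in> carrier (BG G) \<and> \<Phi> (repeat_mset m S) = repeat_mset m (\<Phi> S)"
    if "S \<in> carrier (BG G)" for S m
    by (induction m) (auto simp: BG_one hone hadd BG_add that)
  fix g h assume g: "g \<in> carrier G" and h: "h \<in> carrier G"
  show "g \<otimes> h = h \<otimes> g"
  proof (rule ccontr)
    assume nc: "g \<otimes> h \<noteq> h \<otimes> g"
    define k where "k = g \<otimes> inv h \<otimes> inv g"
    define a where "a = {#g, inv g#}"
    define T where "T = {#h, k#}"
    define n where "n = order G"
    have n0: "n > 0" unfolding n_def using fin order_gt_0_iff_finite by blast
    have kc: "k \<in> carrier G" unfolding k_def using g h by simp
    have aB: "a \<in> carrier (BG G)" unfolding BG_carrier a_def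
      using g by (auto intro!: exI[of _ "[g, inv g]"])
    have bB: "a + T \<in> carrier (BG G)" unfolding BG_carrier a_def T_def
      using g h kc by (auto intro!: exI[of _ "[g, h, inv g, k]"] simp: k_def m_assoc inv_cancel_l2 inv_cancel_r2)
    define c where "c = repeat_mset n T"
    have cB: "c \<in> carrier (BG G)" unfolding BG_carrier c_def T_def
    proof (intro conjI exI[of _ "replicate n h @ replicate n k"])
      show "lprod G (replicate n h @ replicate n k) = \<one>"
      proof -
        have "set (replicate n h) \<subseteq> carrier G" "set (replicate n k) \<subseteq> carrier G"
          using h kc by auto
        then show ?thesis
          using h kc by (simp add: lprod_append lprod_replicate n_def pow_order_eq_1)
      qed
    qed (use h kc in auto)
    have "repeat_mset n (\<Phi> (a + T)) = \<Phi> (repeat_mset n (a + T))" using rep[OF bB] by simp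
    also have "repeat_mset n (a + T) = repeat_mset n a + c" by (simp add: c_def)
    also have "\<Phi> \<dots> = repeat_mset n (\<Phi> a) + \<Phi> c" using rep[OF aB] cB hadd by simp
    finally have eq: "repeat_mset n (\<Phi> (a + T)) = repeat_mset n (\<Phi> a) + \<Phi> c" .
    have sub: "\<Phi> a \<subseteq># \<Phi> (a + T)"
      unfolding subseteq_mset_def
    proof
      fix x
      have "n * count (\<Phi> (a + T)) x = n * count (\<Phi> a) x + count (\<Phi> c) x"
        using arg_cong[OF eq, of "\<lambda>M. count M x"] by simp
      then have "n * count (\<Phi> a) x \<le> n * count (\<Phi> (a + T)) x" by linarith
      then show "count (\<Phi> a) x \<le> count (\<Phi> (a + T)) x" using n0 by simp
    qed
    obtain v w where v: "v \<in> carrier (BG G)" and w: "w \<in> carrier (BG G)" and vw: "a + T = v + w"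
      and pv: "\<Phi> v = \<Phi> a" using ii[OF aB bB sub] by blast
    have "\<Phi> a \<noteq> {#}" using i[OF aB] by (auto simp: a_def)
    then have "v \<noteq> {#}" using pv hone by auto
    moreover have "w \<noteq> {#}"
    proof
      assume "w = {#}"
      then have "\<Phi> (a + T) = \<Phi> a" using vw pv by simp
      then have "\<Phi> c = {#}" using eq by simp
      then have "c = {#}" using i[OF cB] by simp
      then show False using n0 by (auto simp: c_def T_def elim: gr0_implies_Suc)
    qed
    moreover have "v + w = {#g, inv g#} + {#h, g \<otimes> inv h \<otimes> inv g#}"
      using vw by (simp add: a_def T_def k_def)
    ultimately show False using atom[OF g h nc _ v w] by blast
  qed
qed


lemma (in comm_group) BG_diff:
  assumes a: "a \<in> carrier (BG G)" and b: "a + c \<in> carrier (BG G)" and c: "set_mset c \<subseteq> carrier G"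
  shows "c \<in> carrier (BG G)"
proof -
  obtain xa where xa: "mset xa = a" "lprod G xa = \<one>" and sa: "set_mset a \<subseteq> carrier G"
    using a unfolding BG_carrier by blast
  obtain xb where xb: "mset xb = a + c" "lprod G xb = \<one>" using b unfolding BG_carrier by blast
  obtain xc where xc: "mset xc = c" using ex_mset by blast
  have s1: "set xa \<subseteq> carrier G" using xa sa by (metis set_mset_mset)
  have s2: "set xc \<subseteq> carrier G" using xc c by (metis set_mset_mset)
  have "lprod G (xa @ xc) = lprod G xb"
    using lprod_perm[of "xa @ xc" xb] xa xb xc s1 s2 by simp
  then have "lprod G xc = \<one>" using xa xb s1 s2 by (simp add: lprod_append lprod_closed)
  then show ?thesis unfolding BG_carrier using xc c by blast
qed

lemma BG_Krull:
  fixes G :: "('a, 'g) monoid_scheme"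
  assumes cg: "comm_group G"
  shows "Krull_monoid (BG G) TYPE('a)"
proof -
  interpret comm_group G by (rule cg)
  have h1: "(\<lambda>x. x) \<in> mon_hom (BG G) (free_ab_monoid (carrier G))"
    unfolding mon_hom_def by (auto simp: BG_carrier)
  have h2: "\<forall>a\<in>carrier (BG G). \<forall>b\<in>carrier (BG G).
     a divides\<^bsub>free_ab_monoid (carrier G)\<^esub> b \<longrightarrow> a divides\<^bsub>BG G\<^esub> b"
  proof (intro ballI impI)
    fix a b assume a: "a \<in> carrier (BG G)" and b: "b \<in> carrier (BG G)"
      and d: "a divides\<^bsub>free_ab_monoid (carrier G)\<^esub> b"
    then obtain c where c: "set_mset c \<subseteq> carrier G" "b = a + c" by (auto simp: factor_def)
    then have "c \<in> carrier (BG G)" using BG_diff a b by blast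
    then show "a divides\<^bsub>BG G\<^esub> b" using c by (auto simp: factor_def)
  qed
  have "divisor_hom (BG G) (free_ab_monoid (carrier G)) (\<lambda>x. x)"
    unfolding divisor_hom_def using h1 h2 by simp
  then show ?thesis unfolding Krull_monoid_def using BG_cmc by blast
qed

lemma id_transfer: "monoid H \<Longrightarrow> transfer_hom H H (\<lambda>x. x)"
proof -
  assume m: "monoid H"
  have c1: "carrier H = {u \<otimes>\<^bsub>H\<^esub> e |u e. u \<in> carrier H \<and> e \<in> Units H}"
  proof
    show "carrier H \<subseteq> {u \<otimes>\<^bsub>H\<^esub> e |u e. u \<in> carrier H \<and> e \<in> Units H}"
    proof
      fix x assume "x \<in> carrier H"
      then have "x = x \<otimes>\<^bsub>H\<^esub> \<one>\<^bsub>H\<^esub> \<and> x \<in> carrier H \<and> \<one>\<^bsub>H\<^esub> \<in> Units H"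
        using m monoid.r_one monoid.Units_one_closed by metis
      then show "x \<in> {u \<otimes>\<^bsub>H\<^esub> e |u e. u \<in> carrier H \<and> e \<in> Units H}" by blast
    qed
    show "{u \<otimes>\<^bsub>H\<^esub> e |u e. u \<in> carrier H \<and> e \<in> Units H} \<subseteq> carrier H"
    proof
      fix x assume "x \<in> {u \<otimes>\<^bsub>H\<^esub> e |u e. u \<in> carrier H \<and> e \<in> Units H}"
      then obtain u e where "x = u \<otimes>\<^bsub>H\<^esub> e" "u \<in> carrier H" "e \<in> Units H" by blast
      then show "x \<in> carrier H" by (simp add: monoid.m_closed[OF m] monoid.Units_closed[OF m])
    qed
  qed
  have c2: "{u \<in> carrier H. u \<in> Units H} = Units H" unfolding Units_def by blast
  have c4: "\<forall>u\<in>carrier H. \<forall>b\<in>carrier H. \<forall>c\<in>carrier H. u = b \<otimes>\<^bsub>H\<^esub> c \<longrightarrow>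
          (\<exists>v\<in>carrier H. \<exists>w\<in>carrier H. u = v \<otimes>\<^bsub>H\<^esub> w
             \<and> unit_coset H v = unit_coset H b \<and> unit_coset H w = unit_coset H c)"
  proof (intro ballI impI)
    fix u b c assume "b \<in> carrier H" "c \<in> carrier H" "u = b \<otimes>\<^bsub>H\<^esub> c"
    then show "\<exists>v\<in>carrier H. \<exists>w\<in>carrier H. u = v \<otimes>\<^bsub>H\<^esub> w
             \<and> unit_coset H v = unit_coset H b \<and> unit_coset H w = unit_coset H c" by blast
  qed
  have c3: "(\<lambda>x. x) \<in> mon_hom H H" unfolding mon_hom_def by auto
  show ?thesis unfolding transfer_hom_def using c1 c2 c3 c4 by (intro conjI)
qed


lemma Krull_comm:
  fixes G :: "('a, 'g) monoid_scheme"
  assumes gr: "group G" and fin: "finite (carrier G)" and K: "Krull_monoid (BG G) TYPE('p)"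
  shows "comm_group G"
proof -
  interpret group G by (rule gr)
  from K obtain P :: "'p set" and \<phi> where d: "divisor_hom (BG G) (free_ab_monoid P) \<phi>"
    unfolding Krull_monoid_def by blast
  have hom: "\<phi> \<in> mon_hom (BG G) (free_ab_monoid P)"
    and dv: "\<forall>a\<in>carrier (BG G). \<forall>b\<in>carrier (BG G).
       \<phi> a divides\<^bsub>free_ab_monoid P\<^esub> \<phi> b \<longrightarrow> a divides\<^bsub>BG G\<^esub> b"
    using d unfolding divisor_hom_def by auto
  have hone: "\<phi> {#} = {#}" using hom by (simp add: mon_hom_def)
  have hc: "set_mset (\<phi> u) \<subseteq> P" if "u \<in> carrier (BG G)" for u
    using hom that unfolding mon_hom_def by (auto simp: Pi_iff)
  show ?thesis
  proof (rule main[OF fin hom])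
    fix u assume u: "u \<in> carrier (BG G)" "\<phi> u = {#}"
    have "\<phi> u divides\<^bsub>free_ab_monoid P\<^esub> \<phi> {#}" unfolding factor_def using u hone by auto
    then have "u divides\<^bsub>BG G\<^esub> {#}" using dv u BG_one by blast
    then show "u = {#}" by (auto simp: factor_def)
  next
    fix a b assume a: "a \<in> carrier (BG G)" and b: "b \<in> carrier (BG G)" and s: "\<phi> a \<subseteq># \<phi> b"
    have "set_mset (\<phi> b - \<phi> a) \<subseteq> P" using hc[OF b] by (meson in_diffD subset_iff)
    moreover have "\<phi> b = \<phi> a + (\<phi> b - \<phi> a)" using s by simp
    ultimately have "\<phi> a divides\<^bsub>free_ab_monoid P\<^esub> \<phi> b" unfolding factor_def by auto
    then have "a divides\<^bsub>BG G\<^esub> b" using dv a b by blast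
    then obtain c where "c \<in> carrier (BG G)" "b = a + c" by (auto simp: factor_def)
    then show "\<exists>v\<in>carrier (BG G). \<exists>w\<in>carrier (BG G). b = v + w \<and> \<phi> v = \<phi> a" using a by blast
  qed
qed

lemma transfer_comm:
  fixes G :: "('a, 'g) monoid_scheme"
  assumes gr: "group G" and fin: "finite (carrier G)" and TK: "transfer_Krull (BG G) TYPE('b) TYPE('q)"
  shows "comm_group G"
proof -
  interpret group G by (rule gr)
  from TK obtain B :: "'b monoid" and \<theta> where K: "Krull_monoid B TYPE('q)"
    and T: "transfer_hom (BG G) B \<theta>" unfolding transfer_Krull_def by blast
  from K obtain P :: "'q set" and \<psi> where cmc: "comm_monoid_cancel B"
    and d: "divisor_hom B (free_ab_monoid P) \<psi>" unfolding Krull_monoid_def by blast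
  interpret B: comm_monoid_cancel B by (rule cmc)
  have \<psi>hom: "\<psi> \<in> mon_hom B (free_ab_monoid P)"
    and \<psi>dv: "\<forall>a\<in>carrier B. \<forall>b\<in>carrier B.
       \<psi> a divides\<^bsub>free_ab_monoid P\<^esub> \<psi> b \<longrightarrow> a divides\<^bsub>B\<^esub> b"
    using d unfolding divisor_hom_def by auto
  have \<theta>hom: "\<theta> \<in> mon_hom (BG G) B"
    and \<theta>U: "{u \<in> carrier (BG G). \<theta> u \<in> Units B} = Units (BG G)"
    and \<theta>T2: "\<forall>u\<in>carrier (BG G). \<forall>b\<in>carrier B. \<forall>c\<in>carrier B. \<theta> u = b \<otimes>\<^bsub>B\<^esub> c \<longrightarrow>
          (\<exists>v\<in>carrier (BG G). \<exists>w\<in>carrier (BG G). u = v \<otimes>\<^bsub>BG G\<^esub> w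
             \<and> unit_coset B (\<theta> v) = unit_coset B b \<and> unit_coset B (\<theta> w) = unit_coset B c)"
    using T unfolding transfer_hom_def by blast+
  have \<theta>c: "\<theta> u \<in> carrier B" if "u \<in> carrier (BG G)" for u
    using \<theta>hom that unfolding mon_hom_def by auto
  have \<theta>add: "\<theta> (x + y) = \<theta> x \<otimes>\<^bsub>B\<^esub> \<theta> y" if "x \<in> carrier (BG G)" "y \<in> carrier (BG G)" for x y
    using \<theta>hom that unfolding mon_hom_def by auto
  have \<theta>one: "\<theta> {#} = \<one>\<^bsub>B\<^esub>" using \<theta>hom unfolding mon_hom_def by auto
  have \<psi>c: "set_mset (\<psi> x) \<subseteq> P" if "x \<in> carrier B" for x
    using \<psi>hom that unfolding mon_hom_def by (auto simp: Pi_iff)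
  have \<psi>add: "\<psi> (x \<otimes>\<^bsub>B\<^esub> y) = \<psi> x + \<psi> y" if "x \<in> carrier B" "y \<in> carrier B" for x y
    using \<psi>hom that unfolding mon_hom_def by auto
  have \<psi>one: "\<psi> \<one>\<^bsub>B\<^esub> = {#}" using \<psi>hom unfolding mon_hom_def by auto
  define \<Phi> where "\<Phi> = (\<lambda>u. \<psi> (\<theta> u))"
  have hom: "\<Phi> \<in> mon_hom (BG G) (free_ab_monoid P)"
    unfolding mon_hom_def \<Phi>_def
    by (auto simp: \<theta>c \<psi>c \<theta>add \<psi>add \<theta>one \<psi>one BG_add)
  have \<psi>unit: "\<psi> e = {#}" if eU: "e \<in> Units B" for e
  proof -
    obtain x where x: "x \<in> carrier B" "x \<otimes>\<^bsub>B\<^esub> e = \<one>\<^bsub>B\<^esub>" using B.Units_l_inv_ex[OF eU] by blast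
    have "e \<in> carrier B" using eU by (rule B.Units_closed)
    then have "\<psi> x + \<psi> e = {#}" using x \<psi>add \<psi>one by metis
    then show ?thesis by simp
  qed
  show ?thesis
  proof (rule main[OF fin hom])
    fix u assume u: "u \<in> carrier (BG G)" "\<Phi> u = {#}"
    have "\<psi> (\<theta> u) divides\<^bsub>free_ab_monoid P\<^esub> \<psi> \<one>\<^bsub>B\<^esub>"
      unfolding factor_def using u \<psi>one by (auto simp: \<Phi>_def)
    then have "\<theta> u divides\<^bsub>B\<^esub> \<one>\<^bsub>B\<^esub>" using \<psi>dv \<theta>c[OF u(1)] B.one_closed by blast
    then obtain c where c: "c \<in> carrier B" "\<one>\<^bsub>B\<^esub> = \<theta> u \<otimes>\<^bsub>B\<^esub> c" by (auto simp: factor_def)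
    then have "\<theta> u \<in> Units B" unfolding Units_def using \<theta>c[OF u(1)] B.m_comm by auto
    then have "u \<in> Units (BG G)" using \<theta>U u by blast
    then show "u = {#}" by (simp add: BG_Units)
  next
    fix a b assume a: "a \<in> carrier (BG G)" and b: "b \<in> carrier (BG G)" and s: "\<Phi> a \<subseteq># \<Phi> b"
    have "set_mset (\<Phi> b - \<Phi> a) \<subseteq> P" using \<psi>c[OF \<theta>c[OF b]] unfolding \<Phi>_def by (meson in_diffD subset_iff)
    moreover have "\<Phi> b = \<Phi> a + (\<Phi> b - \<Phi> a)" using s by simp
    ultimately have "\<psi> (\<theta> a) divides\<^bsub>free_ab_monoid P\<^esub> \<psi> (\<theta> b)" unfolding factor_def \<Phi>_def by auto
    then have "\<theta> a divides\<^bsub>B\<^esub> \<theta> b" using \<psi>dv \<theta>c[OF a] \<theta>c[OF b] by blast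
    then obtain c where c: "c \<in> carrier B" "\<theta> b = \<theta> a \<otimes>\<^bsub>B\<^esub> c" by (auto simp: factor_def)
    then obtain v w where v: "v \<in> carrier (BG G)" and w: "w \<in> carrier (BG G)" and bvw: "b = v + w"
      and uc: "unit_coset B (\<theta> v) = unit_coset B (\<theta> a)"
      using \<theta>T2 b \<theta>c[OF a] by fastforce
    have "\<theta> a \<in> unit_coset B (\<theta> a)" unfolding unit_coset_def
      using \<theta>c[OF a] B.Units_one_closed by (auto intro!: image_eqI[of _ _ "\<one>\<^bsub>B\<^esub>"])
    then have "\<theta> a \<in> unit_coset B (\<theta> v)" using uc by simp
    then obtain e where e: "e \<in> Units B" "\<theta> a = \<theta> v \<otimes>\<^bsub>B\<^esub> e" unfolding unit_coset_def by blast
    then have "\<Phi> a = \<Phi> v" unfolding \<Phi>_def using \<psi>add \<theta>c[OF v] B.Units_closed \<psi>unit by simp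
    then show "\<exists>v\<in>carrier (BG G). \<exists>w\<in>carrier (BG G). b = v + w \<and> \<Phi> v = \<Phi> a" using v w bvw by metis
  qed
qed

theorem proposition3p4:
  fixes G :: "('a, 'g) monoid_scheme"
  assumes "group G" and "finite (carrier G)"
  shows "(comm_group G \<longleftrightarrow> Krull_monoid (BG G) TYPE('a))
       \<and> (comm_group G \<longleftrightarrow> transfer_Krull (BG G) TYPE('a multiset) TYPE('a))
       \<and> (Krull_monoid (BG G) TYPE('p) \<longrightarrow> comm_group G)
       \<and> (transfer_Krull (BG G) TYPE('b) TYPE('q) \<longrightarrow> comm_group G)"
proof -
  interpret group G by (rule assms(1))
  have m: "monoid (BG G)" using BG_cmc by (simp add: comm_monoid_cancel_def monoid_cancel_def)
  have T1: "transfer_Krull (BG G) TYPE('a multiset) TYPE('a)" if "comm_group G"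
    unfolding transfer_Krull_def using BG_Krull[OF that] id_transfer[OF m] by blast
  have KA: "comm_group G \<Longrightarrow> Krull_monoid (BG G) TYPE('a)" by (rule BG_Krull)
  have K1: "Krull_monoid (BG G) TYPE('a) \<Longrightarrow> comm_group G" by (rule Krull_comm[OF assms])
  have K2: "Krull_monoid (BG G) TYPE('p) \<Longrightarrow> comm_group G" by (rule Krull_comm[OF assms])
  have T2: "transfer_Krull (BG G) TYPE('a multiset) TYPE('a) \<Longrightarrow> comm_group G"
    by (rule transfer_comm[OF assms])
  have T3: "transfer_Krull (BG G) TYPE('b) TYPE('q) \<Longrightarrow> comm_group G"
    by (rule transfer_comm[OF assms])
  show ?thesis using KA K1 K2 T1 T2 T3 by blast
qed

end
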